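(* Let $\succsim=(\succsim_i)_{i\in I}$ be a profile of marginal preferences and let $\mu\in\mathcal M$ be a matching. Then $\mu$ is unambiguously individually rational at $\succsim$ if and only if $\mu$ is component-wise individually rational at $\succsim$.
   Context: Setup. $I=\{1,\dots,n\}$ is a finite set of agents and $O$ a finite set of objects. Each agent $i$ is endowed with a nonempty set $\Omega_i\subseteq O$; the sets $\Omega_i$ are pairwise disjoint and $\bigcup_{i\in I}\Omega_i=O$. A matching is a map $\mu:I\to 2^O$ with $\mu(i)\cap\mu(j)=\emptyset$ for $i\neq j$ and $|\mu(i)|=|\Omega_i|$ for every $i$; $\mathcal M$ is the set of matchings, and $\Omega$ also denotes the endowment matching $i\mapsto\Omega_i$. Agent $i$'s consumption set is $\mathcal X_i=\{X\subseteq O:|X|=|\Omega_i|\}$; a preference of $i$ is a complete, transitive, reflexive relation $R_i$ on $\mathcal X_i$ with strict part $P_i$. A marginal preference of $i$ is a weak order $\succsim_i$ on $O$ (strict part $\succ_i$). $R_i$ is responsive to $\succsim_i$ if for all $o,p\in O$ and all $Q\in\mathcal X_i$ with $o\in Q$, $p\notin Q$: $Q\mathrel{R_i}(Q\setminus\{o\})\cup\{p\}$ iff $o\succsim_i p$. Given a profile $R$, $\mu$ is individually rational at $R$ if $\mu(i)\mathrel{R_i}\Omega_i$ for all $i$; $\mu'$ Pareto-improves $\mu$ if $\mu'(i)\mathrel{R_i}\mu(i)$ for all $i$ and $\mu'(i)\mathrel{P_i}\mu(i)$ for some $i$; $\mu$ is Pareto-efficient if no matching Pareto-improves it. Given a profile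 $\succsim$ of marginal preferences, $\mu$ is unambiguously individually rational if it is individually rational at every profile $R$ such that each $R_i$ is responsive to $\succsim_i$. The matching $\mu$ is component-wise individually rational at $\succsim$ if for every $i\in I$ and every $\omega\in\Omega_i$, $|\{o\in\mu(i):o\succsim_i\omega\}|\ \ge\ |\{o\in\Omega_i:o\succsim_i\omega\}|$. *)

theory Defs
  imports Main
begin

text \<open>Marginal preferences: m i o p means o \<succsim>_i p.
  Preferences: R i X Y means X R_i Y (on bundles).\<close>

definition weak_order_on :: "'a set \<Rightarrow> ('a \<Rightarrow> 'a \<Rightarrow> bool) \<Rightarrow> bool" where
  "weak_order_on A r \<longleftrightarrow>
     (\<forall>x\<in>A. r x x) \<and>
     (\<forall>x\<in>A. \<forall>y\<in>A. r x y \<or> r y x) \<and>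
     (\<forall>x\<in>A. \<forall>y\<in>A. \<forall>z\<in>A. r x y \<longrightarrow> r y z \<longrightarrow> r x z)"

definition endowment_economy :: "'i set \<Rightarrow> 'o set \<Rightarrow> ('i \<Rightarrow> 'o set) \<Rightarrow> bool" where
  "endowment_economy I Obj Omega \<longleftrightarrow>
     finite I \<and> finite Obj \<and>
     (\<forall>i\<in>I. Omega i \<noteq> {} \<and> Omega i \<subseteq> Obj) \<and>
     (\<forall>i\<in>I. \<forall>j\<in>I. i \<noteq> j \<longrightarrow> Omega i \<inter> Omega j = {}) \<and>
     (\<Union>i\<in>I. Omega i) = Obj"

definition is_matching :: "'i set \<Rightarrow> 'o set \<Rightarrow> ('i \<Rightarrow> 'o set) \<Rightarrow> ('i \<Rightarrow> 'o set) \<Rightarrow> bool" where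
  "is_matching I Obj Omega mu \<longleftrightarrow>
     (\<forall>i\<in>I. mu i \<subseteq> Obj \<and> card (mu i) = card (Omega i)) \<and>
     (\<forall>i\<in>I. \<forall>j\<in>I. i \<noteq> j \<longrightarrow> mu i \<inter> mu j = {})"

definition consumption_set :: "'o set \<Rightarrow> ('i \<Rightarrow> 'o set) \<Rightarrow> 'i \<Rightarrow> 'o set set" where
  "consumption_set Obj Omega i = {X. X \<subseteq> Obj \<and> card X = card (Omega i)}"

definition responsive ::
  "'o set \<Rightarrow> 'o set set \<Rightarrow> ('o set \<Rightarrow> 'o set \<Rightarrow> bool) \<Rightarrow> ('o \<Rightarrow> 'o \<Rightarrow> bool) \<Rightarrow> bool" where
  "responsive Obj X Ri mi \<longleftrightarrow>
     (\<forall>a\<in>Obj. \<forall>p\<in>Obj. \<forall>Q\<in>X. a \<in> Q \<longrightarrow> p \<notin> Q \<longrightarrow>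
        (Ri Q ((Q - {a}) \<union> {p}) \<longleftrightarrow> mi a p))"

definition individually_rational ::
  "'i set \<Rightarrow> ('i \<Rightarrow> 'o set) \<Rightarrow> ('i \<Rightarrow> 'o set \<Rightarrow> 'o set \<Rightarrow> bool) \<Rightarrow> ('i \<Rightarrow> 'o set) \<Rightarrow> bool" where
  "individually_rational I Omega R mu \<longleftrightarrow> (\<forall>i\<in>I. R i (mu i) (Omega i))"

definition unambiguously_IR ::
  "'i set \<Rightarrow> 'o set \<Rightarrow> ('i \<Rightarrow> 'o set) \<Rightarrow> ('i \<Rightarrow> 'o \<Rightarrow> 'o \<Rightarrow> bool) \<Rightarrow> ('i \<Rightarrow> 'o set) \<Rightarrow> bool" where
  "unambiguously_IR I Obj Omega m mu \<longleftrightarrow>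
     (\<forall>R. (\<forall>i\<in>I. weak_order_on (consumption_set Obj Omega i) (R i) \<and>
                 responsive Obj (consumption_set Obj Omega i) (R i) (m i))
          \<longrightarrow> individually_rational I Omega R mu)"

definition componentwise_IR ::
  "'i set \<Rightarrow> ('i \<Rightarrow> 'o set) \<Rightarrow> ('i \<Rightarrow> 'o \<Rightarrow> 'o \<Rightarrow> bool) \<Rightarrow> ('i \<Rightarrow> 'o set) \<Rightarrow> bool" where
  "componentwise_IR I Omega m mu \<longleftrightarrow>
     (\<forall>i\<in>I. \<forall>w\<in>Omega i. card {a\<in>mu i. m i a w} \<ge> card {a\<in>Omega i. m i a w})"

end

theory Submission
  imports Defs
begin

lemma max_ex:
  assumes "finite S" "S \<noteq> {}" "\<forall>x\<in>S. \<forall>y\<in>S. r x y \<or> r y x"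
    "\<forall>x\<in>S. \<forall>y\<in>S. \<forall>z\<in>S. r x y \<longrightarrow> r y z \<longrightarrow> r x z"
  shows "\<exists>x\<in>S. \<forall>a\<in>S. r x a"
  using assms
proof (induction S rule: finite_ne_induct)
  case (singleton x) then show ?case by blast
next
  case (insert x F)
  have t1: "\<forall>x\<in>F. \<forall>y\<in>F. r x y \<or> r y x" using insert.prems(1) by blast
  have t2: "\<forall>x\<in>F. \<forall>y\<in>F. \<forall>z\<in>F. r x y \<longrightarrow> r y z \<longrightarrow> r x z" using insert.prems(2) by blast
  obtain m where m: "m \<in> F" "\<forall>a\<in>F. r m a" using insert.IH[OF t1 t2] by blast
  have xx: "r x x" using insert.prems(1) by blast
  show ?case
  proof (cases "r x m")
    case True
    have "\<forall>a\<in>insert x F. r x a"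
    proof
      fix a assume a: "a \<in> insert x F"
      show "r x a"
      proof (cases "a = x")
        case True then show ?thesis using xx by simp
      next
        case False
        then have aF: "a \<in> F" using a by simp
        have "r x m \<longrightarrow> r m a \<longrightarrow> r x a"
          using bspec[OF bspec[OF bspec[OF insert.prems(2)] ]] m(1) aF by blast
        then show ?thesis using True m(2) aF by blast
      qed
    qed
    then show ?thesis by blast
  next
    case False
    then have "r m x" using insert.prems(1) m(1) by blast
    then have "\<forall>a\<in>insert x F. r m a" using m(2) by blast
    then show ?thesis using m(1) by blast
  qed
qed

lemma min_ex:
  assumes "finite S" "S \<noteq> {}" "S \<subseteq> A" "weak_order_on A r"
  shows "\<exists>x\<in>S. \<forall>a\<in>S. r a x"
proof -
  have t: "\<forall>x\<in>S. \<forall>y\<in>S. r y x \<or> r x y"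
    using assms(3,4) unfolding weak_order_on_def by blast
  have tr: "\<forall>x\<in>S. \<forall>y\<in>S. \<forall>z\<in>S. r y x \<longrightarrow> r z y \<longrightarrow> r z x"
    using assms(3,4) unfolding weak_order_on_def by blast
  show ?thesis using max_ex[of S "\<lambda>x y. r y x", OF assms(1,2) t tr] by simp
qed

lemma max_ex2:
  assumes "finite S" "S \<noteq> {}" "S \<subseteq> A" "weak_order_on A r"
  shows "\<exists>x\<in>S. \<forall>a\<in>S. r x a"
proof -
  have t: "\<forall>x\<in>S. \<forall>y\<in>S. r x y \<or> r y x"
    using assms(3,4) unfolding weak_order_on_def by blast
  have tr: "\<forall>x\<in>S. \<forall>y\<in>S. \<forall>z\<in>S. r x y \<longrightarrow> r y z \<longrightarrow> r x z"
    using assms(3,4) unfolding weak_order_on_def by blast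
  show ?thesis using max_ex[OF assms(1,2) t tr] .
qed

lemma chain:
  fixes r :: "'o \<Rightarrow> 'o \<Rightarrow> bool" and R :: "'o set \<Rightarrow> 'o set \<Rightarrow> bool"
  assumes fin: "finite Obj" and wo: "weak_order_on Obj r" and WR: "weak_order_on C R"
    and resp: "responsive Obj C R r" and C: "C = {X. X \<subseteq> Obj \<and> card X = k}"
  shows "card (Y - X) = n \<Longrightarrow> X \<in> C \<Longrightarrow> Y \<in> C \<Longrightarrow>
     (\<forall>w\<in>Obj. card {a\<in>X. r a w} \<le> card {a\<in>Y. r a w}) \<Longrightarrow> R Y X"
proof (induction n arbitrary: X)
  case 0
  have fY: "finite Y" using 0 C fin finite_subset by auto
  have fX: "finite X" using 0 C fin finite_subset by auto
  have "Y \<subseteq> X" using 0 fY by auto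
  then have "Y = X" using 0 C fX card_subset_eq[of X Y] by auto
  have "\<forall>x\<in>C. R x x" using WR unfolding weak_order_on_def by blast
  then show ?case using \<open>Y = X\<close> 0(2) by blast
next
  case (Suc n)
  have XO: "X \<subseteq> Obj" and YO: "Y \<subseteq> Obj" using Suc.prems C by auto
  have fY: "finite Y" using YO fin finite_subset by auto
  have fX: "finite X" using XO fin finite_subset by auto
  have ck: "card X = card Y" using Suc.prems C by auto
  have "X - Y \<noteq> {}"
  proof
    assume "X - Y = {}"
    then have "X \<subseteq> Y" by auto
    then have "X = Y" using ck fY card_subset_eq[of Y X] by auto
    then show False using Suc.prems by auto
  qed
  have rtr: "\<forall>x\<in>Obj. \<forall>y\<in>Obj. \<forall>z\<in>Obj. r x y \<longrightarrow> r y z \<longrightarrow> r x z"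
    using wo unfolding weak_order_on_def by blast
  have rrefl: "\<forall>x\<in>Obj. r x x" using wo unfolding weak_order_on_def by blast
  obtain x where x: "x \<in> X - Y" "\<forall>a\<in>X - Y. r x a"
  proof -
    have "finite (X - Y)" using fX by simp
    moreover have "X - Y \<subseteq> Obj" using XO by blast
    ultimately have "\<exists>x\<in>X - Y. \<forall>a\<in>X - Y. r x a" using max_ex2[OF _ \<open>X - Y \<noteq> {}\<close> _ wo] by blast
    then show ?thesis using that by blast
  qed
  have xO: "x \<in> Obj" using x XO by auto
  obtain y0 where y0: "y0 \<in> Y - X" "r y0 x"
  proof (rule ccontr)
    assume "\<not> thesis"
    then have h: "\<forall>a\<in>Y - X. \<not> r a x" using that by blast
    have "{a\<in>Y. r a x} \<subset> {a\<in>X. r a x}"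
    proof
      show "{a\<in>Y. r a x} \<subseteq> {a\<in>X. r a x}" using h by blast
      have "r x x" using rrefl xO by blast
      then have "x \<in> {a\<in>X. r a x}" using x by blast
      moreover have "x \<notin> {a\<in>Y. r a x}" using x by blast
      ultimately show "{a\<in>Y. r a x} \<noteq> {a\<in>X. r a x}" by blast
    qed
    then have "card {a\<in>Y. r a x} < card {a\<in>X. r a x}"
      using fX by (auto intro: psubset_card_mono)
    then show False using bspec[OF Suc.prems(4) xO] by linarith
  qed
  obtain y where y: "y \<in> Y - X" "\<forall>a\<in>Y - X. r y a"
  proof -
    have "finite (Y - X)" using fY by simp
    moreover have "Y - X \<subseteq> Obj" using YO by blast
    moreover have "Y - X \<noteq> {}" using y0(1) by blast
    ultimately have "\<exists>x\<in>Y - X. \<forall>a\<in>Y - X. r x a" using max_ex2[OF _ _ _ wo] by blast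
    then show ?thesis using that by blast
  qed
  have yO: "y \<in> Obj" using y YO by auto
  have y0O: "y0 \<in> Obj" using y0 YO by blast
  have "r y y0" using y y0 by blast
  moreover have "r y y0 \<longrightarrow> r y0 x \<longrightarrow> r y x" by (rule bspec[OF bspec[OF bspec[OF rtr yO] y0O] xO])
  ultimately have ryx: "r y x" using y0(2) by blast
  define X' where "X' = insert y (X - {x})"
  have cpos: "card X > 0" using fX x by (auto simp: card_gt_0_iff)
  have X'C: "X' \<in> C" using Suc.prems(2) C x y fX yO cpos
    unfolding X'_def by (auto simp: card_insert_if)
  have "Y - X' = (Y - X) - {y}" unfolding X'_def using x by auto
  then have cY: "card (Y - X') = n" using Suc.prems(1) y by simp
  have D: "\<forall>w\<in>Obj. card {a\<in>X'. r a w} \<le> card {a\<in>Y. r a w}"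
  proof
    fix w assume wO: "w \<in> Obj"
    have fin1: "finite {a\<in>X. r a w}" "finite {a\<in>Y. r a w}" using fX fY by auto
    show "card {a\<in>X'. r a w} \<le> card {a\<in>Y. r a w}"
    proof (cases "r y w \<and> \<not> r x w")
      case True
      have "{a\<in>X'. r a w} \<subseteq> {a\<in>Y. r a w}"
      proof
        fix a assume a: "a \<in> {a\<in>X'. r a w}"
        show "a \<in> {a\<in>Y. r a w}"
        proof (cases "a = y")
          case True then show ?thesis using a y by auto
        next
          case False
          then have aX: "a \<in> X" "r a w" using a unfolding X'_def by auto
          show ?thesis
          proof (rule ccontr)
            assume "a \<notin> {a\<in>Y. r a w}"
            then have "a \<in> X - Y" using aX by auto
            then have "r x a" using x by auto
            moreover have "a \<in> Obj" using aX(1) XO by blast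
            ultimately have "r x w" using bspec[OF bspec[OF bspec[OF rtr xO] \<open>a \<in> Obj\<close>] wO] aX(2) by blast
            then show False using True by auto
          qed
        qed
      qed
      then show ?thesis using fin1 by (intro card_mono) auto
    next
      case False
      then have "\<not> r y w \<or> r x w" by blast
      then have "card {a\<in>X'. r a w} \<le> card {a\<in>X. r a w}"
      proof
        assume "\<not> r y w"
        then have "{a\<in>X'. r a w} \<subseteq> {a\<in>X. r a w}" unfolding X'_def by auto
        then show ?thesis using fin1 by (intro card_mono) auto
      next
        assume rx: "r x w"
        have "{a\<in>X'. r a w} \<subseteq> insert y ({a\<in>X. r a w} - {x})" unfolding X'_def by auto
        then have "card {a\<in>X'. r a w} \<le> card (insert y ({a\<in>X. r a w} - {x}))"
          using fin1 by (intro card_mono) auto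
        also have "\<dots> = card {a\<in>X. r a w}"
        proof -
          have xin: "x \<in> {a\<in>X. r a w}" using x rx by blast
          then have "card {a\<in>X. r a w} > 0" using fin1 by (auto simp: card_gt_0_iff)
          then show ?thesis using y xin fin1 by (simp add: card_insert_if card_Diff_singleton)
        qed
        finally show ?thesis .
      qed
      then show ?thesis using Suc.prems(4) wO by (meson order_trans)
    qed
  qed
  have IH: "R Y X'" using Suc.IH[OF cY X'C Suc.prems(3) D] .
  have "X' - {y} \<union> {x} = X" unfolding X'_def using x y by auto
  moreover have "R X' (X' - {y} \<union> {x}) \<longleftrightarrow> r y x"
  proof -
    have yX': "y \<in> X'" and xX': "x \<notin> X'" unfolding X'_def using x y by auto
    have "\<forall>a\<in>Obj. \<forall>p\<in>Obj. \<forall>Q\<in>C. a \<in> Q \<longrightarrow> p \<notin> Q \<longrightarrow> (R Q ((Q - {a}) \<union> {p}) \<longleftrightarrow> r a p)"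
      using resp unfolding responsive_def .
    then have "y \<in> X' \<longrightarrow> x \<notin> X' \<longrightarrow> (R X' ((X' - {y}) \<union> {x}) \<longleftrightarrow> r y x)"
      using yO xO X'C by blast
    then show ?thesis using yX' xX' by blast
  qed
  ultimately have RX'X: "R X' X" using ryx by simp
  have trC: "\<forall>a\<in>C. \<forall>b\<in>C. \<forall>c\<in>C. R a b \<longrightarrow> R b c \<longrightarrow> R a c"
    using WR unfolding weak_order_on_def by blast
  have "R Y X' \<longrightarrow> R X' X \<longrightarrow> R Y X"
    using bspec[OF bspec[OF bspec[OF trC Suc.prems(3)] X'C] Suc.prems(2)] .
  then show ?case using IH RX'X by blast
qed

lemma additive:
  fixes u :: "'o \<Rightarrow> int"
  assumes fin: "finite Obj" and rep: "\<forall>a\<in>Obj. \<forall>p\<in>Obj. (u p \<le> u a \<longleftrightarrow> mi a p)"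
    and C: "C = {X. X \<subseteq> Obj \<and> card X = k}"
  shows "weak_order_on C (\<lambda>X Y. sum u Y \<le> sum u X) \<and> responsive Obj C (\<lambda>X Y. sum u Y \<le> sum u X) mi"
proof
  show "weak_order_on C (\<lambda>X Y. sum u Y \<le> sum u X)" unfolding weak_order_on_def by auto
  show "responsive Obj C (\<lambda>X Y. sum u Y \<le> sum u X) mi"
    unfolding responsive_def
  proof (intro ballI impI)
    fix a p Q assume a: "a \<in> Obj" and p: "p \<in> Obj" and Q: "Q \<in> C" and aQ: "a \<in> Q" and pQ: "p \<notin> Q"
    have fQ: "finite Q" using Q C fin finite_subset by auto
    have e1: "sum u Q = u a + sum u (Q - {a})" using fQ aQ by (simp add: sum.remove)
    have "(Q - {a}) \<union> {p} = insert p (Q - {a})" by auto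
    then have e2: "sum u ((Q - {a}) \<union> {p}) = u p + sum u (Q - {a})" using fQ pQ by simp
    show "(sum u ((Q - {a}) \<union> {p}) \<le> sum u Q) \<longleftrightarrow> mi a p"
    proof -
      have k: "mi a p \<longleftrightarrow> u p \<le> u a" using rep a p by blast
      have "(sum u ((Q - {a}) \<union> {p}) \<le> sum u Q) \<longleftrightarrow> u p \<le> u a" unfolding e1 e2 by simp
      then show ?thesis using k by simp
    qed
  qed
qed

lemma rank_rep:
  assumes fin: "finite Obj" and wo: "weak_order_on Obj r" and a: "a \<in> Obj" and p: "p \<in> Obj"
  shows "card {b\<in>Obj. r p b} \<le> card {b\<in>Obj. r a b} \<longleftrightarrow> r a p"
proof -
  have refl: "\<forall>x\<in>Obj. r x x" using wo unfolding weak_order_on_def by blast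
  have tot: "\<forall>x\<in>Obj. \<forall>y\<in>Obj. r x y \<or> r y x" using wo unfolding weak_order_on_def by blast
  have tr: "\<forall>x\<in>Obj. \<forall>y\<in>Obj. \<forall>z\<in>Obj. r x y \<longrightarrow> r y z \<longrightarrow> r x z"
    using wo unfolding weak_order_on_def by blast
  show ?thesis
  proof
    assume h: "card {b\<in>Obj. r p b} \<le> card {b\<in>Obj. r a b}"
    show "r a p"
    proof (rule ccontr)
      assume n: "\<not> r a p"
      then have rpa: "r p a" using tot a p by blast
      have sub: "{b\<in>Obj. r a b} \<subseteq> {b\<in>Obj. r p b}"
      proof
        fix b assume "b \<in> {b\<in>Obj. r a b}"
        then have b: "b \<in> Obj" "r a b" by simp_all
        have "r p a \<longrightarrow> r a b \<longrightarrow> r p b" using tr p a b(1) by blast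
        then show "b \<in> {b\<in>Obj. r p b}" using rpa b by simp
      qed
      have "p \<in> {b\<in>Obj. r p b}" using refl p by simp
      moreover have "p \<notin> {b\<in>Obj. r a b}" using n by simp
      ultimately have "{b\<in>Obj. r a b} \<subset> {b\<in>Obj. r p b}" using sub by blast
      then have "card {b\<in>Obj. r a b} < card {b\<in>Obj. r p b}" using fin by (auto intro: psubset_card_mono)
      then show False using h by simp
    qed
  next
    assume h: "r a p"
    have "{b\<in>Obj. r p b} \<subseteq> {b\<in>Obj. r a b}"
    proof
      fix b assume "b \<in> {b\<in>Obj. r p b}"
      then have b: "b \<in> Obj" "r p b" by simp_all
      have "r a p \<longrightarrow> r p b \<longrightarrow> r a b" using tr p a b(1) by blast
      then show "b \<in> {b\<in>Obj. r a b}" using h b by simp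
    qed
    then show "card {b\<in>Obj. r p b} \<le> card {b\<in>Obj. r a b}" using fin by (intro card_mono) auto
  qed
qed

lemma sum_if_card:
  assumes "finite X"
  shows "(\<Sum>a\<in>X. (if P a then (N::int) else 0)) = N * int (card {a\<in>X. P a})"
proof -
  have "(\<Sum>a\<in>X. (if P a then N else 0)) = (\<Sum>a\<in>{a\<in>X. P a}. N)"
    using sum.inter_filter[OF assms, of "\<lambda>_. N" P] by simp
  then show ?thesis by simp
qed

theorem proposition1:
  fixes I :: "'i set" and Obj :: "'o set" and Omega :: "'i \<Rightarrow> 'o set"
    and m :: "'i \<Rightarrow> 'o \<Rightarrow> 'o \<Rightarrow> bool" and mu :: "'i \<Rightarrow> 'o set"
  assumes "endowment_economy I Obj Omega"
    and "\<forall>i\<in>I. weak_order_on Obj (m i)"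
    and "is_matching I Obj Omega mu"
  shows "unambiguously_IR I Obj Omega m mu \<longleftrightarrow> componentwise_IR I Omega m mu"
proof
  have fin: "finite Obj" using assms(1) unfolding endowment_economy_def by auto
  have OmO: "\<forall>i\<in>I. Omega i \<subseteq> Obj" using assms(1) unfolding endowment_economy_def by auto
  have muO: "\<forall>i\<in>I. mu i \<subseteq> Obj \<and> card (mu i) = card (Omega i)" using assms(3) unfolding is_matching_def by auto
  show "unambiguously_IR I Obj Omega m mu \<Longrightarrow> componentwise_IR I Omega m mu"
  proof (rule ccontr)
    assume U: "unambiguously_IR I Obj Omega m mu" and nC: "\<not> componentwise_IR I Omega m mu"
    have "\<exists>i\<in>I. \<exists>w\<in>Omega i. \<not> card {a\<in>mu i. m i a w} \<ge> card {a\<in>Omega i. m i a w}"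
      using nC unfolding componentwise_IR_def by blast
    then obtain i w where i: "i \<in> I" and w: "w \<in> Omega i"
      and lt': "\<not> card {a\<in>mu i. m i a w} \<ge> card {a\<in>Omega i. m i a w}" by blast
    have lt: "card {a\<in>mu i. m i a w} < card {a\<in>Omega i. m i a w}" using lt' by (simp only: not_le)
    have wO: "w \<in> Obj" using OmO i w by auto
    define N :: int where "N = int (card Obj * card Obj) + 1"
    define U where "U j a = (if j = i \<and> m i a w then N else 0) + int (card {b\<in>Obj. m j a b})" for j a
    define R where "R j X Y = (sum (U j) Y \<le> sum (U j) X)" for j X Y
    have rep: "\<forall>a\<in>Obj. \<forall>p\<in>Obj. (U j p \<le> U j a \<longleftrightarrow> m j a p)" if j: "j \<in> I" for j
    proof (intro ballI)
      fix a p assume a: "a \<in> Obj" and p: "p \<in> Obj"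
      have wo: "weak_order_on Obj (m j)" using assms(2) j by auto
      have rr: "card {b\<in>Obj. m j p b} \<le> card {b\<in>Obj. m j a b} \<longleftrightarrow> m j a p"
        using rank_rep[OF fin wo a p] .
      have cb: "card {b\<in>Obj. m j x b} \<le> card Obj" for x using fin by (intro card_mono) auto
      have cO: "card Obj \<le> card Obj * card Obj" by (cases "card Obj") auto
      show "U j p \<le> U j a \<longleftrightarrow> m j a p"
      proof (cases "j = i")
        case False then show ?thesis using rr unfolding U_def by simp
      next
        case True
        have tr: "m i a p \<Longrightarrow> m i p w \<Longrightarrow> m i a w" and tr2: "\<not> m i a w \<Longrightarrow> m i p w \<Longrightarrow> \<not> m i a p"
          using wo True a p wO unfolding weak_order_on_def by blast+
        have tot: "m i a w \<Longrightarrow> \<not> m i p w \<Longrightarrow> m i a p"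
          using wo True a p wO unfolding weak_order_on_def by blast
        have ua: "U j a = (if m i a w then N else 0) + int (card {b\<in>Obj. m j a b})"
          and up: "U j p = (if m i p w then N else 0) + int (card {b\<in>Obj. m j p b})"
          using True unfolding U_def by auto
        have Nb: "int (card {b\<in>Obj. m j x b}) < N" for x using cb[of x] cO unfolding N_def by linarith
        show ?thesis
        proof (cases "m i a w"; cases "m i p w")
          assume "m i a w" "m i p w" then show ?thesis using ua up rr by simp
        next
          assume "m i a w" "\<not> m i p w" then show ?thesis using ua up tot True Nb[of p]
            by simp
        next
          assume "\<not> m i a w" "m i p w" then show ?thesis using ua up tr2 True Nb[of a]
            by simp
        next
          assume "\<not> m i a w" "\<not> m i p w" then show ?thesis using ua up rr by simp
        qed
      qed
    qed
    have Rj: "R j = (\<lambda>X Y. sum (U j) Y \<le> sum (U j) X)" for j by (simp add: R_def fun_eq_iff)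
    have cs: "consumption_set Obj Omega j = {X. X \<subseteq> Obj \<and> card X = card (Omega j)}" for j
      by (simp add: consumption_set_def)
    have H: "\<forall>j\<in>I. weak_order_on (consumption_set Obj Omega j) (R j) \<and>
                 responsive Obj (consumption_set Obj Omega j) (R j) (m j)"
    proof
      fix j assume j: "j \<in> I"
      show "weak_order_on (consumption_set Obj Omega j) (R j) \<and>
                 responsive Obj (consumption_set Obj Omega j) (R j) (m j)"
        unfolding Rj by (rule additive[OF fin rep[OF j] cs])
    qed
    have "individually_rational I Omega R mu"
      using mp[OF spec[OF U[unfolded unambiguously_IR_def], of R] H] .
    then have "R i (mu i) (Omega i)" using i unfolding individually_rational_def by (rule bspec)
    then have ge: "sum (U i) (Omega i) \<le> sum (U i) (mu i)" unfolding R_def .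
    have fM: "finite (mu i)" using muO i fin by (meson finite_subset)
    have fOm: "finite (Omega i)" using OmO i fin by (meson finite_subset)
    have split: "sum (U i) X = N * int (card {a\<in>X. m i a w}) + (\<Sum>a\<in>X. int (card {b\<in>Obj. m i a b}))"
      if "finite X" for X
      using sum_if_card[OF that, of "\<lambda>a. m i a w" N] unfolding U_def by (simp add: sum.distrib)
    have bnd: "(\<Sum>a\<in>X. int (card {b\<in>Obj. m i a b})) \<le> int (card Obj * card Obj)" if "X \<subseteq> Obj" for X
    proof -
      have "(\<Sum>a\<in>X. int (card {b\<in>Obj. m i a b})) \<le> (\<Sum>a\<in>X. int (card Obj))"
        using fin by (intro sum_mono) (auto intro: card_mono)
      also have "\<dots> = int (card X) * int (card Obj)" by simp
      also have "\<dots> \<le> int (card Obj) * int (card Obj)" using card_mono[OF fin that] by (simp add: mult_right_mono)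
      finally show ?thesis by simp
    qed
    have b1: "(\<Sum>a\<in>mu i. int (card {b\<in>Obj. m i a b})) \<le> int (card Obj * card Obj)" using bnd muO i by auto
    have b2: "0 \<le> (\<Sum>a\<in>Omega i. int (card {b\<in>Obj. m i a b}))" by (simp add: sum_nonneg)
    have "N * int (card {a\<in>mu i. m i a w}) + N \<le> N * int (card {a\<in>Omega i. m i a w})"
    proof -
      have "int (card {a\<in>mu i. m i a w}) + 1 \<le> int (card {a\<in>Omega i. m i a w})" using lt by simp
      then have "N * (int (card {a\<in>mu i. m i a w}) + 1) \<le> N * int (card {a\<in>Omega i. m i a w})"
        unfolding N_def by (intro mult_left_mono) auto
      then show ?thesis by (simp add: algebra_simps)
    qed
    then show False using ge split[OF fM] split[OF fOm] b1 b2 unfolding N_def by linarith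
  qed
  show "componentwise_IR I Omega m mu \<Longrightarrow> unambiguously_IR I Obj Omega m mu"
    unfolding unambiguously_IR_def individually_rational_def
  proof (intro allI impI ballI)
    fix R i assume CI: "componentwise_IR I Omega m mu"
      and H: "\<forall>i\<in>I. weak_order_on (consumption_set Obj Omega i) (R i) \<and>
                 responsive Obj (consumption_set Obj Omega i) (R i) (m i)"
      and i: "i \<in> I"
    have wo: "weak_order_on Obj (m i)" using assms(2) i by auto
    have rtot: "\<forall>x\<in>Obj. \<forall>y\<in>Obj. m i x y \<or> m i y x"
      using wo unfolding weak_order_on_def by blast
    have rtr: "\<forall>x\<in>Obj. \<forall>y\<in>Obj. \<forall>z\<in>Obj. m i x y \<longrightarrow> m i y z \<longrightarrow> m i x z"
      using wo unfolding weak_order_on_def by blast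
    have fM: "finite (mu i)" using muO i fin by (meson finite_subset)
    have fOm: "finite (Omega i)" using OmO i fin by (meson finite_subset)
    have D: "\<forall>w\<in>Obj. card {a\<in>Omega i. m i a w} \<le> card {a\<in>mu i. m i a w}"
    proof
      fix w assume wO: "w \<in> Obj"
      show "card {a\<in>Omega i. m i a w} \<le> card {a\<in>mu i. m i a w}"
      proof (cases "{a\<in>Omega i. m i a w} = {}")
        case True then show ?thesis by (simp only: card.empty)
      next
        case False
        have SO: "{a\<in>Omega i. m i a w} \<subseteq> Obj" using OmO i by auto
        have ex: "\<exists>x\<in>{a\<in>Omega i. m i a w}. \<forall>a\<in>{a\<in>Omega i. m i a w}. m i a x"
          using min_ex[OF _ False SO wo] fOm by simp
        then obtain w' where w': "w' \<in> {a\<in>Omega i. m i a w}" "\<forall>a\<in>{a\<in>Omega i. m i a w}. m i a w'"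
          by blast
        have w'Om: "w' \<in> Omega i" using w'(1) by simp
        have w'O: "w' \<in> Obj" using w'Om OmO i by (meson subsetD)
        have "card {a\<in>Omega i. m i a w} \<le> card {a\<in>Omega i. m i a w'}"
        proof (rule card_mono)
          show "finite {a\<in>Omega i. m i a w'}" using fOm by simp
          show "{a\<in>Omega i. m i a w} \<subseteq> {a\<in>Omega i. m i a w'}" using w'(2) by blast
        qed
        also have "\<dots> \<le> card {a\<in>mu i. m i a w'}" using CI[unfolded componentwise_IR_def, rule_format, OF i w'Om] .
        also have "\<dots> \<le> card {a\<in>mu i. m i a w}"
        proof (rule card_mono)
          show "finite {a\<in>mu i. m i a w}" using fM by simp
          show "{a\<in>mu i. m i a w'} \<subseteq> {a\<in>mu i. m i a w}"
          proof
            fix a assume a: "a \<in> {a\<in>mu i. m i a w'}"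
            have amu: "a \<in> mu i" and aw: "m i a w'" using a by simp_all
            have "mu i \<subseteq> Obj" using muO i by blast
            then have aO: "a \<in> Obj" using amu by (rule subsetD)
            have mww: "m i w' w" using w'(1) by simp
            have T: "m i a w' \<longrightarrow> m i w' w \<longrightarrow> m i a w" by (rule bspec[OF bspec[OF bspec[OF rtr aO] w'O] wO])
            have "m i a w" by (rule mp[OF mp[OF T aw] mww])
            then show "a \<in> {a\<in>mu i. m i a w}" using a by simp
          qed
        qed
        finally show ?thesis .
      qed
    qed
    show "R i (mu i) (Omega i)"
    proof -
      have Hi: "weak_order_on (consumption_set Obj Omega i) (R i)"
        "responsive Obj (consumption_set Obj Omega i) (R i) (m i)" using H i by blast+
      have cs: "consumption_set Obj Omega i = {X. X \<subseteq> Obj \<and> card X = card (Omega i)}"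
        unfolding consumption_set_def by simp
      have m1: "Omega i \<in> consumption_set Obj Omega i" using OmO i unfolding cs by auto
      have m2: "mu i \<in> consumption_set Obj Omega i" using muO i unfolding cs by auto
      show ?thesis using chain[OF fin wo Hi(1) Hi(2) cs refl m1 m2 D] .
    qed
  qed
qed

end
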